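(* The sequential fan $S_\omega$ is not $L$-selective.
   Context: For spaces $Y$, $X$, a map $\varphi:Y\to\mathcal P(X)\setminus\{\emptyset\}$ is lower semicontinuous (l.s.c.) if $\{y:\varphi(y)\cap U\neq\emptyset\}$ is open in $Y$ for every open $U\subseteq X$; a selection is a map $f:Y\to X$ with $f(y)\in\varphi(y)$ for all $y$. $X$ is $Y$-selective if every l.s.c. map from $Y$ to the nonempty closed subsets of $X$ has a continuous selection; $L$-selective means $(\omega+1)$-selective, with $\omega+1$ carrying the order topology. The sequential fan $S_\omega$ is the quotient of the topological sum of countably many convergent sequences (with limits) obtained by identifying all limit points. *)

theory Defs
  imports "HOL-Analysis.Analysis"
begin

definition lsc_map :: "'a topology \<Rightarrow> 'b topology \<Rightarrow> ('a \<Rightarrow> 'b set) \<Rightarrow> bool" where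
  "lsc_map Y X \<phi> \<longleftrightarrow>
     (\<forall>U. openin X U \<longrightarrow> openin Y {y \<in> topspace Y. \<phi> y \<inter> U \<noteq> {}})"

definition selective :: "'a topology \<Rightarrow> 'b topology \<Rightarrow> bool" where
  "selective Y X \<longleftrightarrow>
     (\<forall>\<phi>. (\<forall>y\<in>topspace Y. closedin X (\<phi> y) \<and> \<phi> y \<noteq> {}) \<and> lsc_map Y X \<phi> \<longrightarrow>
        (\<exists>f. continuous_map Y X f \<and> (\<forall>y\<in>topspace Y. f y \<in> \<phi> y)))"

text \<open>omega+1 with the order topology: the type enat with its (order) topology.\<close>
definition omega_plus_one :: "enat topology" where
  "omega_plus_one = euclidean"

definition L_selective :: "'b topology \<Rightarrow> bool" where
  "L_selective X \<longleftrightarrow> selective omega_plus_one X"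

definition quotient_topology :: "'a topology \<Rightarrow> ('a \<Rightarrow> 'b) \<Rightarrow> 'b topology" where
  "quotient_topology X q =
     topology (\<lambda>U. U \<subseteq> q ` topspace X \<and> openin X {x \<in> topspace X. q x \<in> U})"

text \<open>Sequential fan: topological sum of countably many convergent sequences with their
  limits (each a copy of omega+1, the limit being \<infinity>), with all limit points identified
  to the single point (0, \<infinity>).\<close>
definition fan_identify :: "nat \<times> enat \<Rightarrow> nat \<times> enat" where
  "fan_identify p = (if snd p = \<infinity> then (0, \<infinity>) else p)"

definition sequential_fan :: "(nat \<times> enat) topology" where
  "sequential_fan = quotient_topology (sum_topology (\<lambda>n::nat. omega_plus_one) UNIV) fan_identify"

end

theory Submission
  imports Defs
begin

lemma istop_quot: "istopology (\<lambda>U. U \<subseteq> q ` topspace X \<and> openin X {x \<in> topspace X. q x \<in> U})"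
proof -
  have 1: "{x \<in> topspace X. q x \<in> S \<inter> T} = {x \<in> topspace X. q x \<in> S} \<inter> {x \<in> topspace X. q x \<in> T}" for S T
    by auto
  have 2: "{x \<in> topspace X. q x \<in> \<Union>K} = \<Union>((\<lambda>U. {x \<in> topspace X. q x \<in> U}) ` K)" for K
    by auto
  have A: "S \<inter> T \<subseteq> q ` topspace X \<and> openin X {x \<in> topspace X. q x \<in> S \<inter> T}"
    if a: "S \<subseteq> q ` topspace X \<and> openin X {x \<in> topspace X. q x \<in> S}"
      "T \<subseteq> q ` topspace X \<and> openin X {x \<in> topspace X. q x \<in> T}" for S T
  proof -
    have "openin X ({x \<in> topspace X. q x \<in> S} \<inter> {x \<in> topspace X. q x \<in> T})"
      using a by (intro openin_Int) simp_all
    then show ?thesis using a unfolding 1 by blast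
  qed
  have B: "\<Union>K \<subseteq> q ` topspace X \<and> openin X {x \<in> topspace X. q x \<in> \<Union>K}"
    if a: "\<forall>U\<in>K. U \<subseteq> q ` topspace X \<and> openin X {x \<in> topspace X. q x \<in> U}" for K
  proof -
    have "openin X (\<Union>((\<lambda>U. {x \<in> topspace X. q x \<in> U}) ` K))"
    proof (rule openin_Union)
      fix S assume "S \<in> (\<lambda>U. {x \<in> topspace X. q x \<in> U}) ` K"
      then obtain U where "U \<in> K" "S = {x \<in> topspace X. q x \<in> U}" by blast
      then show "openin X S" using a by simp
    qed
    moreover have "\<Union>K \<subseteq> q ` topspace X" using a by blast
    ultimately show ?thesis unfolding 2 by simp
  qed
  show ?thesis
    unfolding istopology_def
    apply (rule conjI)
     apply (intro allI impI)
     apply (erule (1) A)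
    apply (intro allI impI)
    apply (erule B)
    done
qed

lemma openin_quot: "openin (quotient_topology X q) U \<longleftrightarrow> U \<subseteq> q ` topspace X \<and> openin X {x \<in> topspace X. q x \<in> U}"
  unfolding quotient_topology_def topology_inverse'[OF istop_quot] by (rule refl)

abbreviation apex :: "nat \<times> enat" where "apex \<equiv> (0, \<infinity>)"

lemma ts_sum: "topspace (sum_topology (\<lambda>n::nat. (euclidean::enat topology)) UNIV) = UNIV"
  by (simp only: topspace_sum_topology o_def topspace_euclidean UNIV_Times_UNIV)

lemma os_sum: "openin (sum_topology (\<lambda>n::nat. (euclidean::enat topology)) UNIV) V \<longleftrightarrow> (\<forall>n. open {e. (n, e) \<in> V})" for V
  by (simp only: openin_sum_topology o_def topspace_euclidean UNIV_Times_UNIV subset_UNIV simp_thms ball_UNIV open_openin)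

lemma openin_fan: "openin sequential_fan U \<longleftrightarrow> U \<subseteq> range fan_identify \<and> (\<forall>n. open {e. fan_identify (n,e) \<in> U})"
  unfolding sequential_fan_def omega_plus_one_def openin_quot ts_sum os_sum
  by (simp only: mem_Collect_eq UNIV_I simp_thms)

lemma topspace_fan: "topspace sequential_fan = range fan_identify"
proof
  show "topspace sequential_fan \<subseteq> range fan_identify"
    using openin_fan[of "topspace sequential_fan"] by simp
  have "openin sequential_fan (range fan_identify)"
    unfolding openin_fan by simp
  then show "range fan_identify \<subseteq> topspace sequential_fan"
    by (rule openin_subset)
qed

lemma open_enat_singleton: "open {enat n}"
proof (cases n)
  case 0
  have "{enat n} = {..<enat 1}"
  proof (intro set_eqI iffI)
    fix x assume "x \<in> {..<enat 1}"
    then show "x \<in> {enat n}" using 0 by (cases x) auto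
  qed (use 0 in auto)
  then show ?thesis by simp
next
  case (Suc m)
  have "{enat n} = {enat m<..<enat (Suc n)}"
  proof (intro set_eqI iffI)
    fix x assume "x \<in> {enat m<..<enat (Suc n)}"
    then show "x \<in> {enat n}" using Suc by (cases x) auto
  qed (use Suc in auto)
  then show ?thesis by simp
qed

lemma open_enat_iff: "open (S::enat set) \<longleftrightarrow> (\<infinity> \<in> S \<longrightarrow> (\<exists>N. \<forall>n\<ge>N. enat n \<in> S))"
proof
  assume o: "open S"
  show "\<infinity> \<in> S \<longrightarrow> (\<exists>N. \<forall>n\<ge>N. enat n \<in> S)"
  proof
    assume "\<infinity> \<in> S"
    from open_left[OF o this, of 0] obtain b where b: "b < \<infinity>" "{b<..\<infinity>} \<subseteq> S"
      by auto
    then obtain N where bN: "b = enat N" by (cases b) auto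
    have "enat n \<in> S" if "n \<ge> Suc N" for n
      using b(2) bN that by auto
    then show "\<exists>N. \<forall>n\<ge>N. enat n \<in> S" by blast
  qed
next
  assume h: "\<infinity> \<in> S \<longrightarrow> (\<exists>N. \<forall>n\<ge>N. enat n \<in> S)"
  have o1: "open (\<Union>x\<in>S - {\<infinity>}. {x})"
  proof (rule open_UN, rule ballI)
    fix x assume "x \<in> S - {\<infinity>}"
    then obtain n where "x = enat n" by (cases x) auto
    then show "open {x}" using open_enat_singleton by simp
  qed
  show "open S"
  proof (cases "\<infinity> \<in> S")
    case False
    then have "S = (\<Union>x\<in>S - {\<infinity>}. {x})" by auto
    then show ?thesis using o1 by simp
  next
    case True
    then obtain N where N: "\<forall>n\<ge>N. enat n \<in> S" using h by blast
    have "{enat N<..} \<subseteq> S"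
    proof
      fix x assume "x \<in> {enat N<..}"
      then show "x \<in> S" using True N by (cases x) auto
    qed
    then have "S = (\<Union>x\<in>S - {\<infinity>}. {x}) \<union> {enat N<..}" using True by auto
    then show ?thesis using o1 by (metis open_Un open_greaterThan)
  qed
qed

lemma fi_fin [simp]: "fan_identify (m, enat k) = (m, enat k)"
  by (simp add: fan_identify_def)

lemma fi_inf [simp]: "fan_identify (m, \<infinity>) = apex"
  by (simp add: fan_identify_def)

lemma fin_in_range [simp]: "(m, enat k) \<in> range fan_identify"
  by (metis fi_fin rangeI)

lemma apex_in_range [simp]: "apex \<in> range fan_identify"
  by (metis fi_inf rangeI)

lemma closed_fan:
  assumes "F \<subseteq> range fan_identify" "apex \<notin> F" "\<And>m. finite {k. (m, enat k) \<in> F}"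
  shows "closedin sequential_fan F"
  unfolding closedin_def topspace_fan
proof (intro conjI)
  show "F \<subseteq> range fan_identify" by fact
  show "openin sequential_fan (range fan_identify - F)"
    unfolding openin_fan
  proof (intro conjI allI)
    fix n
    have eq: "{e. fan_identify (n, e) \<in> range fan_identify - F} = {e. fan_identify (n, e) \<notin> F}"
      by auto
    obtain M where M: "\<forall>k\<in>{k. (n, enat k) \<in> F}. k < M"
      using assms(3)[of n] finite_nat_set_iff_bounded by blast
    show "open {e. fan_identify (n, e) \<in> range fan_identify - F}"
      unfolding eq open_enat_iff
    proof (intro impI exI[of _ M] allI)
      fix k assume "M \<le> k"
      then have "(n, enat k) \<notin> F" using M by (metis (mono_tags) mem_Collect_eq not_le)
      then show "enat k \<in> {e. fan_identify (n, e) \<notin> F}" by simp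
    qed
  next
    show "range fan_identify - F \<subseteq> range fan_identify" by (rule Diff_subset)
  qed
qed

definition phi :: "enat \<Rightarrow> (nat \<times> enat) set" where
  "phi y = (case y of enat n \<Rightarrow> {(Suc (fst (prod_decode n)), enat (snd (prod_decode n))),
                                   (0, enat (fst (prod_decode n)))}
                    | \<infinity> \<Rightarrow> {apex})"

lemma phi_closed: "closedin sequential_fan (phi y) \<and> phi y \<noteq> {}"
proof (cases y)
  case (enat n)
  show ?thesis
  proof
    show "closedin sequential_fan (phi y)"
    proof (rule closed_fan)
      fix m
      show "finite {k. (m, enat k) \<in> phi y}"
        by (rule finite_subset[of _ "{snd (prod_decode n), fst (prod_decode n)}"])
          (auto simp: phi_def enat)
    qed (auto simp: phi_def enat)
  qed (simp add: phi_def enat)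
next
  case infinity
  have "closedin sequential_fan {apex}"
    unfolding closedin_def topspace_fan openin_fan
  proof (intro conjI allI)
    fix n
    have "{e. fan_identify (n, e) \<in> range fan_identify - {apex}} = {e. e \<noteq> \<infinity>}"
      by (auto simp: fan_identify_def)
    then show "open {e. fan_identify (n, e) \<in> range fan_identify - {apex}}"
      unfolding open_enat_iff by simp
  qed auto
  then show ?thesis by (simp add: phi_def infinity)
qed

lemma phi_lsc: "lsc_map omega_plus_one sequential_fan phi"
  unfolding lsc_map_def omega_plus_one_def
proof (intro allI impI)
  fix U assume U: "openin sequential_fan U"
  show "openin euclidean {y \<in> topspace euclidean. phi y \<inter> U \<noteq> {}}"
    unfolding open_openin[symmetric] topspace_euclidean open_enat_iff
  proof (intro impI)
    assume "\<infinity> \<in> {y \<in> UNIV. phi y \<inter> U \<noteq> {}}"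
    then have aU: "apex \<in> U" by (simp add: phi_def)
    have "\<forall>m. \<exists>N. \<forall>k\<ge>N. (m, enat k) \<in> U"
    proof
      fix m
      have "open {e. fan_identify (m, e) \<in> U}" using U unfolding openin_fan by blast
      moreover have "\<infinity> \<in> {e. fan_identify (m, e) \<in> U}" using aU by simp
      ultimately show "\<exists>N. \<forall>k\<ge>N. (m, enat k) \<in> U"
        unfolding open_enat_iff by simp
    qed
    then obtain Nf where Nf: "\<And>m k. k \<ge> Nf m \<Longrightarrow> (m, enat k) \<in> U" by metis
    define A where "A = Nf 0"
    define B where "B = Max (Nf ` {..A})"
    define N where "N = Suc (Max (prod_encode ` ({..A} \<times> {..B})))"
    have "phi (enat n) \<inter> U \<noteq> {}" if "n \<ge> N" for n
    proof
      assume e: "phi (enat n) \<inter> U = {}"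
      obtain a b where ab: "prod_decode n = (a, b)" by fastforce
      have n: "n = prod_encode (a, b)" using ab by (metis prod_decode_inverse)
      have ph: "phi (enat n) = {(Suc a, enat b), (0, enat a)}" by (simp add: phi_def ab)
      have "a < A"
      proof (rule ccontr)
        assume "\<not> a < A"
        then have "(0, enat a) \<in> U" using Nf[of 0 a] A_def by simp
        then show False using e ph by auto
      qed
      have "b < Nf (Suc a)"
      proof (rule ccontr)
        assume "\<not> b < Nf (Suc a)"
        then have "(Suc a, enat b) \<in> U" using Nf[of "Suc a" b] by simp
        then show False using e ph by auto
      qed
      also have "Nf (Suc a) \<le> B" unfolding B_def using \<open>a < A\<close> by (intro Max_ge) auto
      finally have "(a, b) \<in> {..A} \<times> {..B}" using \<open>a < A\<close> by auto
      then have "n \<le> Max (prod_encode ` ({..A} \<times> {..B}))" unfolding n by (intro Max_ge) auto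
      then show False using that N_def by simp
    qed
    then show "\<exists>N. \<forall>n\<ge>N. enat n \<in> {y \<in> UNIV. phi y \<inter> U \<noteq> {}}" by blast
  qed
qed

theorem mainTheorem17:
  shows "\<not> L_selective sequential_fan"
proof
  assume "L_selective sequential_fan"
  then have H: "selective omega_plus_one sequential_fan" by (simp add: L_selective_def)
  have ts: "topspace omega_plus_one = UNIV" by (simp add: omega_plus_one_def)
  have pre: "(\<forall>y\<in>topspace omega_plus_one. closedin sequential_fan (phi y) \<and> phi y \<noteq> {}) \<and> lsc_map omega_plus_one sequential_fan phi"
    using phi_closed phi_lsc by simp
  from H[unfolded selective_def, rule_format, OF pre]
  obtain f where fc: "continuous_map omega_plus_one sequential_fan f" and fs0: "\<forall>y\<in>topspace omega_plus_one. f y \<in> phi y"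
    by blast
  have fs: "f y \<in> phi y" for y using fs0 unfolding ts by simp
  have cont: "\<exists>N. \<forall>n\<ge>N. f (enat n) \<in> U" if "openin sequential_fan U" "apex \<in> U" for U
  proof -
    have "openin omega_plus_one {x \<in> topspace omega_plus_one. f x \<in> U}"
      using openin_continuous_map_preimage[OF fc that(1)] .
    then have "open {x. f x \<in> U}" by (simp add: omega_plus_one_def)
    moreover have "f \<infinity> = apex" using fs[of \<infinity>] by (simp add: phi_def)
    ultimately show ?thesis using that(2) unfolding open_enat_iff by simp
  qed
  have openc: "openin sequential_fan (range fan_identify - F)" if "closedin sequential_fan F" for F
  proof -
    have "openin sequential_fan (topspace sequential_fan - F)" by (rule openin_diff[OF openin_topspace that])
    then show ?thesis by (simp only: topspace_fan)
  qed
  have phin: "phi (enat (prod_encode (a, b))) = {(Suc a, enat b), (0, enat a)}" for a b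
    by (simp add: phi_def)
  have "\<exists>b. f (enat (prod_encode (a, b))) = (Suc a, enat b)" for a
  proof (rule ccontr)
    assume "\<not> ?thesis"
    then have all: "f (enat (prod_encode (a, b))) = (0, enat a)" for b
      using fs[of "enat (prod_encode (a, b))"] unfolding phin by auto
    have "closedin sequential_fan {(0, enat a)}"
    proof (rule closed_fan)
      fix m
      show "finite {k. (m, enat k) \<in> {(0, enat a)}}"
        by (rule finite_subset[of _ "{a}"]) auto
    qed auto
    then have "openin sequential_fan (range fan_identify - {(0, enat a)})" by (rule openc)
    moreover have "apex \<in> range fan_identify - {(0, enat a)}" by simp
    ultimately obtain N where N: "\<forall>n\<ge>N. f (enat n) \<in> range fan_identify - {(0, enat a)}"
      using cont by blast
    have "prod_encode (a, N) \<ge> N" by (rule le_prod_encode_2)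
    then have "f (enat (prod_encode (a, N))) \<in> range fan_identify - {(0, enat a)}" using N by blast
    then show False using all[of N] by simp
  qed
  then obtain b where b: "\<And>a. f (enat (prod_encode (a, b a))) = (Suc a, enat (b a))" by metis
  define D where "D = range (\<lambda>a. (Suc a, enat (b a)))"
  have "closedin sequential_fan D"
  proof (rule closed_fan)
    fix m
    show "finite {k. (m, enat k) \<in> D}"
      by (rule finite_subset[of _ "{b (m - 1)}"]) (auto simp: D_def)
  qed (auto simp: D_def)
  then have oD: "openin sequential_fan (range fan_identify - D)" by (rule openc)
  have "apex \<notin> D" unfolding D_def by auto
  then have aD: "apex \<in> range fan_identify - D" by simp
  obtain N where N: "\<forall>n\<ge>N. f (enat n) \<in> range fan_identify - D"
    using cont[OF oD aD] by blast
  have "prod_encode (N, b N) \<ge> N" by (rule le_prod_encode_1)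
  then have "f (enat (prod_encode (N, b N))) \<in> range fan_identify - D" using N by blast
  moreover have "(Suc N, enat (b N)) \<in> D" unfolding D_def by blast
  ultimately show False using b[of N] by simp
qed

end
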